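(* Let $G$ be a graph of maximum degree at most $3$, and let $S\subseteq V(G)$. If $u$ is a vertex of degree at most $2$ in $G$, then $w_{(G,S)}(u)\leq 2$. Moreover, $w_{(G,S)}(u)=2$ if and only if $u$ is contained in a subgraph $T$ of $G$ that is a tree such that rooting $T$ in $u$ yields a full binary tree and $S\cap V(T)$ is exactly the set of leaves of $T$.
   Context: All graphs are finite, simple and undirected. For a graph $G$, a set $S\subseteq V(G)$, and vertices $u,v$ with $u\in S$ or $v\in S$, ${\rm dist}_{(G,S)}(u,v)$ is the minimum number of edges of a path $P$ in $G$ between $u$ and $v$ such that $S$ contains exactly one endvertex of $P$ and no internal vertex of $P$, and ${\rm dist}_{(G,S)}(u,v)=\infty$ if no such path exists (so ${\rm dist}_{(G,S)}(u,u)=0$ for $u\in S$, and ${\rm dist}_{(G,S)}(u,v)=\infty$ for distinct $u,v\in S$). For $u\in V(G)$, $w_{(G,S)}(u)=\sum_{v\in S}(1/2)^{{\rm dist}_{(G,S)}(u,v)-1}$, where $(1/2)^{\infty}=0$. A rooted tree is a full binary tree if every non-leaf vertex has exactly two children; a leaf of a rooted tree is a vertex with no children. *)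

theory Defs
  imports Complex_Main "HOL-Library.Extended_Nat"
begin

definition graph :: "'a set \<Rightarrow> ('a \<Rightarrow> 'a \<Rightarrow> bool) \<Rightarrow> bool" where
  "graph V E \<longleftrightarrow> finite V \<and> (\<forall>x y. E x y \<longrightarrow> x \<in> V \<and> y \<in> V)
     \<and> (\<forall>x y. E x y \<longrightarrow> E y x) \<and> (\<forall>x. \<not> E x x)"

definition degree :: "'a set \<Rightarrow> ('a \<Rightarrow> 'a \<Rightarrow> bool) \<Rightarrow> 'a \<Rightarrow> nat" where
  "degree V E x = card {y \<in> V. E x y}"

definition is_path :: "'a set \<Rightarrow> ('a \<Rightarrow> 'a \<Rightarrow> bool) \<Rightarrow> 'a list \<Rightarrow> bool" where
  "is_path V E p \<longleftrightarrow> p \<noteq> [] \<and> set p \<subseteq> V \<and> distinct p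
     \<and> (\<forall>i. Suc i < length p \<longrightarrow> E (p ! i) (p ! Suc i))"

definition S_path :: "'a set \<Rightarrow> ('a \<Rightarrow> 'a \<Rightarrow> bool) \<Rightarrow> 'a set \<Rightarrow> 'a \<Rightarrow> 'a \<Rightarrow> 'a list \<Rightarrow> bool" where
  "S_path V E S u v p \<longleftrightarrow> is_path V E p \<and> hd p = u \<and> last p = v
     \<and> card ({hd p, last p} \<inter> S) = 1 \<and> set (butlast (tl p)) \<inter> S = {}"

definition distGS :: "'a set \<Rightarrow> ('a \<Rightarrow> 'a \<Rightarrow> bool) \<Rightarrow> 'a set \<Rightarrow> 'a \<Rightarrow> 'a \<Rightarrow> enat" where
  "distGS V E S u v =
     (if \<exists>p. S_path V E S u v p
      then enat (LEAST n. \<exists>p. S_path V E S u v p \<and> length p = Suc n)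
      else \<infinity>)"

definition wGS :: "'a set \<Rightarrow> ('a \<Rightarrow> 'a \<Rightarrow> bool) \<Rightarrow> 'a set \<Rightarrow> 'a \<Rightarrow> real" where
  "wGS V E S u = (\<Sum>v\<in>S. (case distGS V E S u v of
        enat d \<Rightarrow> (1/2::real) powr (real d - 1) | \<infinity> \<Rightarrow> 0))"

definition subgraph :: "'a set \<Rightarrow> ('a \<Rightarrow> 'a \<Rightarrow> bool) \<Rightarrow> 'a set \<Rightarrow> ('a \<Rightarrow> 'a \<Rightarrow> bool) \<Rightarrow> bool" where
  "subgraph VT ET V E \<longleftrightarrow> VT \<subseteq> V \<and> (\<forall>x y. ET x y \<longrightarrow> E x y \<and> x \<in> VT \<and> y \<in> VT)
     \<and> (\<forall>x y. ET x y \<longrightarrow> ET y x)"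

definition is_tree :: "'a set \<Rightarrow> ('a \<Rightarrow> 'a \<Rightarrow> bool) \<Rightarrow> bool" where
  "is_tree VT ET \<longleftrightarrow> VT \<noteq> {}
     \<and> (\<forall>x\<in>VT. \<forall>y\<in>VT. \<exists>p. is_path VT ET p \<and> hd p = x \<and> last p = y)
     \<and> \<not> (\<exists>c. is_path VT ET c \<and> length c \<ge> 3 \<and> ET (last c) (hd c))"

definition depth :: "'a set \<Rightarrow> ('a \<Rightarrow> 'a \<Rightarrow> bool) \<Rightarrow> 'a \<Rightarrow> 'a \<Rightarrow> nat" where
  "depth VT ET r x = (LEAST n. \<exists>p. is_path VT ET p \<and> hd p = r \<and> last p = x \<and> length p = Suc n)"

definition children :: "'a set \<Rightarrow> ('a \<Rightarrow> 'a \<Rightarrow> bool) \<Rightarrow> 'a \<Rightarrow> 'a \<Rightarrow> 'a set" where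
  "children VT ET r x = {y \<in> VT. ET x y \<and> depth VT ET r y = Suc (depth VT ET r x)}"

definition leaves :: "'a set \<Rightarrow> ('a \<Rightarrow> 'a \<Rightarrow> bool) \<Rightarrow> 'a \<Rightarrow> 'a set" where
  "leaves VT ET r = {x \<in> VT. children VT ET r x = {}}"

definition full_binary :: "'a set \<Rightarrow> ('a \<Rightarrow> 'a \<Rightarrow> bool) \<Rightarrow> 'a \<Rightarrow> bool" where
  "full_binary VT ET r \<longleftrightarrow> (\<forall>x\<in>VT. x \<notin> leaves VT ET r \<longrightarrow> card (children VT ET r x) = 2)"

end

theory Submission
  imports Defs
begin

definition Phi :: "(nat \<Rightarrow> nat) \<Rightarrow> (nat \<Rightarrow> nat) \<Rightarrow> nat \<Rightarrow> real" where
  "Phi a b k = (\<Sum>j\<le>k. real (a j) * (1/2)^j) + real (b k) * (1/2)^k"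

lemma Phi_step: "Phi a b (Suc k) = Phi a b k + (real (a (Suc k) + b (Suc k)) - 2 * real (b k)) * (1/2)^(Suc k)"
  unfolding Phi_def by (simp add: algebra_simps)

lemma Phi_le: "(\<forall>k<K. a (Suc k) + b (Suc k) \<le> 2 * b k) \<Longrightarrow> k \<le> K \<Longrightarrow> Phi a b k \<le> Phi a b 0"
proof (induction k)
  case 0 then show ?case by simp
next
  case (Suc k)
  then have "real (a (Suc k) + b (Suc k)) - 2 * real (b k) \<le> 0"
    by (metis Suc_le_lessD of_nat_le_iff of_nat_mult of_nat_numeral diff_le_0_iff_le)
  then have "(real (a (Suc k) + b (Suc k)) - 2 * real (b k)) * (1/2)^(Suc k) \<le> 0"
    by (simp add: mult_nonpos_nonneg)
  then show ?case using Suc Phi_step[of a b k] by simp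
qed

lemma Phi_ge: "(\<forall>k<K. a (Suc k) + b (Suc k) \<ge> 2 * b k) \<Longrightarrow> k \<le> K \<Longrightarrow> Phi a b k \<ge> Phi a b 0"
proof (induction k)
  case 0 then show ?case by simp
next
  case (Suc k)
  then have "real (a (Suc k) + b (Suc k)) - 2 * real (b k) \<ge> 0"
    by (metis Suc_le_lessD of_nat_le_iff of_nat_mult of_nat_numeral diff_ge_0_iff_ge)
  then have "(real (a (Suc k) + b (Suc k)) - 2 * real (b k)) * (1/2)^(Suc k) \<ge> 0"
    by simp
  then show ?case using Suc Phi_step[of a b k] by simp
qed

lemma Phi_eq:
  assumes le: "\<forall>k<K. a (Suc k) + b (Suc k) \<le> 2 * b k" and eq: "Phi a b K = Phi a b 0" and k: "k < K"
  shows "a (Suc k) + b (Suc k) = 2 * b k"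
proof -
  have mono: "Phi a b m \<le> Phi a b n" if "n \<le> m" "m \<le> K" for n m
    using that
  proof (induction m)
    case 0 then show ?case by simp
  next
    case (Suc m)
    then have "real (a (Suc m) + b (Suc m)) - 2 * real (b m) \<le> 0"
      using le by (metis Suc_le_lessD of_nat_le_iff of_nat_mult of_nat_numeral diff_le_0_iff_le)
    then have "(real (a (Suc m) + b (Suc m)) - 2 * real (b m)) * (1/2)^(Suc m) \<le> 0"
      by (simp add: mult_nonpos_nonneg)
    then have "Phi a b (Suc m) \<le> Phi a b m" using Phi_step[of a b m] by simp
    then show ?case using Suc by (cases "n = Suc m") auto
  qed
  have "Phi a b (Suc k) = Phi a b k"
    using mono[of "Suc k" K] mono[of k "Suc k"] mono[of 0 k] eq k by linarith
  then have "(real (a (Suc k) + b (Suc k)) - 2 * real (b k)) * (1/2)^(Suc k) = 0"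
    using Phi_step[of a b k] by simp
  then have "real (a (Suc k) + b (Suc k)) = 2 * real (b k)" by simp
  then show ?thesis by linarith
qed

lemma walk_to_path:
  "p \<noteq> [] \<Longrightarrow> successively R p \<Longrightarrow> \<exists>q. q \<noteq> [] \<and> successively R q \<and> distinct q \<and> hd q = hd p
     \<and> last q = last p \<and> set q \<subseteq> set p \<and> length q \<le> length p"
proof (induction p)
  case Nil then show ?case by simp
next
  case (Cons x r)
  show ?case
  proof (cases "r = []")
    case True then show ?thesis by (intro exI[of _ "[x]"]) auto
  next
    case False
    then have sr: "successively R r" and Rx: "R x (hd r)" using Cons.prems by (auto simp: successively_Cons)
    obtain q where q: "q \<noteq> []" "successively R q" "distinct q" "hd q = hd r" "last q = last r"
      "set q \<subseteq> set r" "length q \<le> length r" using Cons.IH[OF False sr] by blast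
    show ?thesis
    proof (cases "x \<in> set q")
      case True
      then obtain a b where ab: "q = a @ x # b" by (meson split_list)
      have "successively R (x # b)" using q(2) ab by (simp add: successively_append_iff)
      moreover have "distinct (x # b)" using q(3) ab by simp
      moreover have "last (x # b) = last (x # r)" using q(5) ab False by simp
      moreover have "set (x # b) \<subseteq> set (x # r)" using q(6) ab by auto
      moreover have "length (x # b) \<le> length (x # r)" using q(7) ab by simp
      ultimately show ?thesis by (intro exI[of _ "x # b"]) auto
    next
      case xq: False
      have "successively R (x # q)" using q Rx by (simp add: successively_Cons)
      moreover have "distinct (x # q)" using q xq by simp
      moreover have "last (x # q) = last (x # r)" using q False by simp
      ultimately show ?thesis using q by (intro exI[of _ "x # q"]) auto
    qed
  qed
qed

lemma is_path_iff: "is_path V E p \<longleftrightarrow> p \<noteq> [] \<and> set p \<subseteq> V \<and> distinct p \<and> successively E p"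
  unfolding is_path_def successively_conv_nth by blast

lemma last_notin_butlast: "distinct q \<Longrightarrow> q \<noteq> [] \<Longrightarrow> last q \<notin> set (butlast q)"
  by (metis append_butlast_last_id distinct_append disjoint_iff list.set_intros(1))

lemma set_butlast_sub: "q \<noteq> [] \<Longrightarrow> set q = insert (last q) (set (butlast q))"
  by (metis append_butlast_last_id set_append Un_insert_right empty_set list.simps(15) sup_bot.right_neutral)

lemma least_eq:
  assumes "\<And>n. P n \<Longrightarrow> Q n" "\<And>n. Q n \<Longrightarrow> \<exists>m\<le>n. P m" "\<exists>n. Q n"
  shows "(LEAST n::nat. P n) = (LEAST n. Q n)"
proof -
  obtain n where "Q n" using assms(3) by blast
  obtain m where m: "P m" "m \<le> n" using assms(2)[OF \<open>Q n\<close>] by blast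
  have q: "Q (LEAST n. Q n)" using \<open>Q n\<close> by (rule LeastI)
  obtain m' where m': "P m'" "m' \<le> (LEAST n. Q n)" using assms(2)[OF q] by blast
  have "(LEAST n. P n) \<le> m'" using m'(1) by (rule Least_le)
  moreover have "(LEAST n. Q n) \<le> (LEAST n. P n)" using assms(1)[OF LeastI[of P, OF m(1)]] by (rule Least_le)
  ultimately show ?thesis using m' by linarith
qed

lemma sum_group_pow:
  fixes h :: "'b \<Rightarrow> nat"
  assumes "finite Z" "\<And>z. z \<in> Z \<Longrightarrow> h z \<le> K"
  shows "(\<Sum>z\<in>Z. (1/2::real)^(h z)) = (\<Sum>j\<le>K. real (card {z\<in>Z. h z = j}) * (1/2)^j)"
proof -
  have "(\<Sum>z\<in>Z. (1/2::real)^(h z)) = (\<Sum>j\<le>K. \<Sum>z\<in>{z\<in>Z. h z = j}. (1/2::real)^(h z))"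
    by (rule sum.group[symmetric]) (use assms in auto)
  also have "\<dots> = (\<Sum>j\<le>K. real (card {z\<in>Z. h z = j}) * (1/2)^j)"
    by (rule sum.cong) auto
  finally show ?thesis .
qed


lemma join_walks:
  assumes "successively R p1" "successively R p2" "\<And>x y. R x y \<Longrightarrow> R y x" "p1 \<noteq> []" "p2 \<noteq> []" "hd p1 = hd p2"
  shows "successively R (rev p1 @ tl p2) \<and> rev p1 @ tl p2 \<noteq> [] \<and> hd (rev p1 @ tl p2) = last p1
     \<and> last (rev p1 @ tl p2) = last p2 \<and> set (rev p1 @ tl p2) \<subseteq> set p1 \<union> set p2"
proof -
  obtain t where t: "p2 = hd p1 # t" using assms(5,6) by (cases p2) auto
  have s1: "successively R (rev p1)" using assms(1,3) by (simp add: successively_mono[of _ p1] successively_rev)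
  have s2: "t = [] \<or> R (hd p1) (hd t) \<and> successively R t" using assms(2) t by (metis successively_Cons)
  have "successively R (rev p1 @ t)"
    using s1 s2 assms(4) by (auto simp: successively_append_iff last_rev)
  moreover have "last (rev p1 @ t) = last p2" using t assms(4) by (cases "t = []") (auto simp: last_rev)
  moreover have "hd (rev p1 @ t) = last p1" using assms(4) by (simp add: hd_rev)
  ultimately show ?thesis using t assms(4) by auto
qed

locale G0 =
  fixes V :: "'a set" and E :: "'a \<Rightarrow> 'a \<Rightarrow> bool" and S :: "'a set" and u :: 'a
  assumes gr: "graph V E" and SV: "S \<subseteq> V" and uV: "u \<in> V" and uS: "u \<notin> S"
begin

lemma finV: "finite V" and Esym: "E x y \<Longrightarrow> E y x" and EV: "E x y \<Longrightarrow> x \<in> V \<and> y \<in> V"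
  and Eirr: "\<not> E x x"
  using gr unfolding graph_def by auto

definition gw :: "'a list \<Rightarrow> 'a \<Rightarrow> bool" where
  "gw p x \<longleftrightarrow> p \<noteq> [] \<and> hd p = u \<and> last p = x \<and> successively E p \<and> set p \<subseteq> V \<and> set (butlast p) \<inter> S = {}"

definition R :: "'a \<Rightarrow> bool" where "R x \<longleftrightarrow> (\<exists>p. gw p x)"

definition lev :: "'a \<Rightarrow> nat" where "lev x = (LEAST n. \<exists>p. gw p x \<and> length p = Suc n)"

definition L :: "nat \<Rightarrow> 'a set" where "L k = {x \<in> V. R x \<and> lev x = k}"

lemma gw_path: "gw p x \<Longrightarrow> \<exists>q. gw q x \<and> distinct q \<and> length q \<le> length p"
proof -
  assume g: "gw p x"
  then obtain q where q: "q \<noteq> []" "successively E q" "distinct q" "hd q = hd p"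
     "last q = last p" "set q \<subseteq> set p" "length q \<le> length p"
    using walk_to_path[of p E] unfolding gw_def by blast
  have "set (butlast q) \<inter> S = {}"
  proof -
    have "set (butlast q) \<subseteq> set q - {last q}" using q last_notin_butlast[of q]
      by (metis Diff_empty Diff_insert0 insert_Diff1 insert_subset set_butlast_sub subsetI insertE insertI1 insert_Diff_if)
    also have "\<dots> \<subseteq> set (butlast p)" using q(5,6) set_butlast_sub[of p] g unfolding gw_def by auto
    finally show ?thesis using g unfolding gw_def by auto
  qed
  then show ?thesis using q g unfolding gw_def by auto
qed

lemma lev_le: "gw p x \<Longrightarrow> lev x \<le> length p - 1"
  unfolding lev_def by (rule Least_le) (metis Suc_diff_1 gw_def length_greater_0_conv)

lemma lev_ex: "R x \<Longrightarrow> \<exists>p. gw p x \<and> distinct p \<and> length p = Suc (lev x)"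
proof -
  assume "R x"
  then obtain p0 where "gw p0 x" unfolding R_def by blast
  then have "\<exists>n p. gw p x \<and> length p = Suc n" by (metis Suc_diff_1 gw_def length_greater_0_conv)
  then have "\<exists>p. gw p x \<and> length p = Suc (lev x)" unfolding lev_def by (rule LeastI_ex)
  then obtain p where p: "gw p x" "length p = Suc (lev x)" by blast
  obtain q where q: "gw q x" "distinct q" "length q \<le> length p" using gw_path[OF p(1)] by blast
  have "lev x \<le> length q - 1" by (rule lev_le[OF q(1)])
  then have "length q = Suc (lev x)" using q(3) p(2) q(1) unfolding gw_def by (cases q) auto
  then show ?thesis using q by blast
qed

lemma R_V: "R x \<Longrightarrow> x \<in> V"
  unfolding R_def gw_def by (metis last_in_set subsetD)

lemma R_u: "R u" and lev_u: "lev u = 0"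
proof -
  have g: "gw [u] u" using uV unfolding gw_def by auto
  then show "R u" unfolding R_def by blast
  show "lev u = 0" using lev_le[OF g] by simp
qed

lemma lev0: "R x \<Longrightarrow> lev x = 0 \<Longrightarrow> x = u"
  using lev_ex[of x] unfolding gw_def by (metis One_nat_def hd_Cons_tl last_ConsL length_0_conv length_tl diff_Suc_1)

lemma lev_bound: "R x \<Longrightarrow> lev x < card V"
proof -
  assume "R x"
  then obtain p where p: "gw p x" "distinct p" "length p = Suc (lev x)" using lev_ex by blast
  have "length p = card (set p)" using p(2) by (simp add: distinct_card)
  also have "\<dots> \<le> card V" using p(1) finV unfolding gw_def by (simp add: card_mono)
  finally show ?thesis using p(3) by simp
qed

lemma extend: "R x \<Longrightarrow> x \<notin> S \<Longrightarrow> E x y \<Longrightarrow> R y \<and> lev y \<le> Suc (lev x)"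
proof -
  assume a: "R x" "x \<notin> S" "E x y"
  obtain p where p: "gw p x" "distinct p" "length p = Suc (lev x)" using lev_ex[OF a(1)] by blast
  have "gw (p @ [y]) y"
    using p(1) a EV[OF a(3)] set_butlast_sub[of p] unfolding gw_def
    by (auto simp: successively_append_iff)
  then show ?thesis using lev_le[of "p @ [y]" y] p(3) unfolding R_def by auto
qed

lemma parent: "R y \<Longrightarrow> lev y = Suc k \<Longrightarrow> \<exists>x. R x \<and> lev x = k \<and> x \<notin> S \<and> E x y"
proof -
  assume a: "R y" "lev y = Suc k"
  obtain p where p: "gw p y" "distinct p" "length p = Suc (Suc k)" using lev_ex[OF a(1)] a(2) by metis
  define q where "q = butlast p"
  have pq: "p = q @ [y]" using p(1) unfolding q_def gw_def by (metis append_butlast_last_id)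
  have qne: "q \<noteq> []" using p(3) pq by auto
  have hq: "hd q = u" using p(1) pq qne unfolding gw_def by simp
  have sq: "successively E q" "E (last q) y" using p(1) pq qne unfolding gw_def
    by (auto simp: successively_append_iff)
  have xS: "last q \<notin> S" using p(1) qne unfolding gw_def q_def by (metis disjoint_iff last_in_set)
  have "set (butlast q) \<subseteq> set q" by (meson in_set_butlastD subsetI)
  then have gq: "gw q (last q)" using p(1) pq qne hq sq unfolding gw_def q_def by (auto dest: in_set_butlastD)
  then have l1: "lev (last q) \<le> k" using lev_le[OF gq] pq p(3) by simp
  have "lev y \<le> Suc (lev (last q))" using extend[of "last q" y] gq xS sq unfolding R_def by blast
  then show ?thesis using l1 a(2) gq xS sq(2) unfolding R_def by (intro exI[of _ "last q"]) auto
qed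

lemma set_butlast_cons: "p \<noteq> [] \<Longrightarrow> set (butlast p) = (if tl p = [] then {} else insert (hd p) (set (butlast (tl p))))"
  by (cases p) auto

lemma S_path_iff: "v \<in> S \<Longrightarrow> S_path V E S u v p \<longleftrightarrow> gw p v \<and> distinct p"
proof -
  assume v: "v \<in> S"
  have c: "card ({u, v} \<inter> S) = 1" using v uS by (simp add: insert_Diff_if Int_insert_left)
  show ?thesis
  proof
    assume sp: "S_path V E S u v p"
    then have ne: "p \<noteq> []" and h: "hd p = u" unfolding S_path_def is_path_iff by auto
    have "set (butlast p) \<inter> S = {}"
      using sp uS unfolding set_butlast_cons[OF ne] S_path_def h by auto
    then show "gw p v \<and> distinct p" using sp unfolding S_path_def is_path_iff gw_def by auto
  next
    assume g: "gw p v \<and> distinct p"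
    have "set (butlast (tl p)) \<subseteq> set (butlast p)" unfolding butlast_tl
      by (cases "butlast p") auto
    then show "S_path V E S u v p" using g c unfolding S_path_def is_path_iff gw_def by auto
  qed
qed

lemma dist_eq: "v \<in> S \<Longrightarrow> distGS V E S u v = (if R v then enat (lev v) else \<infinity>)"
proof -
  assume v: "v \<in> S"
  have ex: "(\<exists>p. S_path V E S u v p) \<longleftrightarrow> R v"
    using S_path_iff[OF v] lev_ex unfolding R_def by blast
  have "(LEAST n. \<exists>p. S_path V E S u v p \<and> length p = Suc n) = lev v" if "R v"
  proof -
    have "(LEAST n. \<exists>p. (gw p v \<and> distinct p) \<and> length p = Suc n) = (LEAST n. \<exists>p. gw p v \<and> length p = Suc n)"
    proof (rule least_eq)
      show "\<exists>n p. gw p v \<and> length p = Suc n" using lev_ex[OF that] by blast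
      fix n assume "\<exists>p. gw p v \<and> length p = Suc n"
      then obtain p where p: "gw p v" "length p = Suc n" by blast
      obtain q where q: "gw q v" "distinct q" "length q \<le> length p" using gw_path[OF p(1)] by blast
      then show "\<exists>m\<le>n. \<exists>p. (gw p v \<and> distinct p) \<and> length p = Suc m" using p(2) unfolding gw_def
        by (intro exI[of _ "length q - 1"]) (auto intro!: exI[of _ q])
    qed auto
    then show ?thesis unfolding lev_def using S_path_iff[OF v] by simp
  qed
  then show ?thesis unfolding distGS_def using ex by auto
qed

lemma finS: "finite S" using SV finV finite_subset by blast

lemma w_eq: "wGS V E S u = (\<Sum>v\<in>{v\<in>S. R v}. 2 * (1/2::real)^(lev v))"
proof -
  have p: "(1/2::real) powr (real d - 1) = 2 * (1/2)^d" for d :: nat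
    by (simp add: powr_diff powr_realpow)
  have "wGS V E S u = (\<Sum>v\<in>S. if R v then 2 * (1/2::real)^(lev v) else 0)"
    unfolding wGS_def by (rule sum.cong) (auto simp: dist_eq p)
  also have "\<dots> = (\<Sum>v\<in>{v\<in>S. R v}. 2 * (1/2::real)^(lev v))"
    by (rule sum.inter_filter[symmetric]) (rule finS)
  finally show ?thesis .
qed

definition acnt :: "nat \<Rightarrow> nat" where "acnt k = card (L k \<inter> S)"
definition bcnt :: "nat \<Rightarrow> nat" where "bcnt k = card (L k - S)"

lemma finL: "finite (L k)" unfolding L_def using finV by auto

lemma L_empty: "k \<ge> card V \<Longrightarrow> L k = {}"
  unfolding L_def using lev_bound by fastforce

lemma L0: "L 0 = {u}" unfolding L_def using lev0 R_u lev_u uV by auto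

lemma ab_card: "acnt k + bcnt k = card (L k)"
  unfolding acnt_def bcnt_def using finL[of k] by (metis card_Int_Diff inf.commute)

lemma Phi0: "Phi acnt bcnt 0 = 1" proof -
  have "{u} - S = {u}" using uS by auto
  then show ?thesis unfolding Phi_def acnt_def bcnt_def using L0 uS by simp
qed

lemma w_sum: "wGS V E S u = 2 * (\<Sum>j\<le>card V. real (acnt j) * (1/2)^j)"
proof -
  have "(\<Sum>v\<in>{v\<in>S. R v}. (1/2::real)^(lev v)) = (\<Sum>j\<le>card V. real (card {z\<in>{v\<in>S. R v}. lev z = j}) * (1/2)^j)"
    by (rule sum_group_pow) (use finS lev_bound less_imp_le in auto)
  also have "\<dots> = (\<Sum>j\<le>card V. real (acnt j) * (1/2)^j)"
  proof (rule sum.cong)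
    fix j
    have "{z\<in>{v\<in>S. R v}. lev z = j} = L j \<inter> S" unfolding L_def using SV by auto
    then show "real (card {z\<in>{v\<in>S. R v}. lev z = j}) * (1/2)^j = real (acnt j) * (1/2)^j"
      unfolding acnt_def by simp
  qed simp
  finally show ?thesis unfolding w_eq by (simp add: sum_distrib_left[symmetric])
qed

end

lemma double_count:
  assumes "finite A" "finite B"
  shows "(\<Sum>x\<in>A. card {y\<in>B. P x y}) = (\<Sum>y\<in>B. card {x\<in>A. P x y})"
proof -
  have "(\<Sum>x\<in>A. card {y\<in>B. P x y}) = (\<Sum>x\<in>A. \<Sum>y\<in>{y. y\<in>B \<and> P x y}. 1::nat)" by simp
  also have "\<dots> = (\<Sum>y\<in>B. \<Sum>x\<in>{x. x\<in>A \<and> P x y}. 1::nat)" by (rule sum.swap_restrict) (use assms in auto)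
  finally show ?thesis by simp
qed

locale G1 = G0 +
  assumes deg3: "\<forall>x\<in>V. degree V E x \<le> 3" and deg2: "degree V E u \<le> 2"
begin

lemma child_card: "x \<in> L k - S \<Longrightarrow> card {y \<in> L (Suc k). E x y} \<le> 2"
proof (cases k)
  case 0
  assume x: "x \<in> L k - S"
  then have "x = u" using L0 0 by auto
  have "card {y \<in> L (Suc k). E x y} \<le> card {y\<in>V. E x y}"
    by (rule card_mono) (use finV L_def in auto)
  then show ?thesis using deg2 \<open>x = u\<close> unfolding degree_def by simp
next
  case (Suc m)
  assume x: "x \<in> L k - S"
  then have Rx: "R x" "lev x = Suc m" "x \<in> V" using Suc unfolding L_def by auto
  obtain z where z: "R z" "lev z = m" "E z x" using parent[OF Rx(1,2)] by blast
  have zin: "z \<in> {y\<in>V. E x y}" using z EV Esym by blast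
  have "{y \<in> L (Suc k). E x y} \<subseteq> {y\<in>V. E x y} - {z}" using z Suc unfolding L_def by auto
  then have "card {y \<in> L (Suc k). E x y} \<le> card ({y\<in>V. E x y} - {z})"
    by (rule card_mono[rotated]) (use finV in auto)
  also have "\<dots> = card {y\<in>V. E x y} - 1" using zin by simp
  also have "\<dots> \<le> 2" using deg3 Rx(3) unfolding degree_def by fastforce
  finally show ?thesis .
qed

lemma Lsuc_card: "card (L (Suc k)) \<le> 2 * card (L k - S)"
proof -
  have "L (Suc k) \<subseteq> (\<Union>x\<in>L k - S. {y \<in> L (Suc k). E x y})"
  proof
    fix y assume "y \<in> L (Suc k)"
    then obtain x where "R x" "lev x = k" "x \<notin> S" "E x y" using parent unfolding L_def by blast
    then show "y \<in> (\<Union>x\<in>L k - S. {y \<in> L (Suc k). E x y})" using \<open>y \<in> L (Suc k)\<close> R_V unfolding L_def by auto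
  qed
  then have "card (L (Suc k)) \<le> card (\<Union>x\<in>L k - S. {y \<in> L (Suc k). E x y})"
    by (rule card_mono[rotated]) (use finL in auto)
  also have "\<dots> \<le> (\<Sum>x\<in>L k - S. card {y \<in> L (Suc k). E x y})"
    by (rule card_UN_le) (use finL in auto)
  also have "\<dots> \<le> (\<Sum>x\<in>L k - S. 2)" by (rule sum_mono) (rule child_card)
  finally show ?thesis by simp
qed

lemma cond_le: "acnt (Suc k) + bcnt (Suc k) \<le> 2 * bcnt k"
  using ab_card Lsuc_card unfolding bcnt_def by metis

lemma sum_le: "(\<Sum>j\<le>card V. real (acnt j) * (1/2)^j) \<le> 1"
proof -
  have "(\<Sum>j\<le>card V. real (acnt j) * (1/2)^j) \<le> Phi acnt bcnt (card V)" unfolding Phi_def by simp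
  also have "\<dots> \<le> Phi acnt bcnt 0" by (rule Phi_le[of "card V"]) (use cond_le in auto)
  finally show ?thesis using Phi0 by simp
qed

lemma w_le: "wGS V E S u \<le> 2" using w_sum sum_le by simp

lemma tight: "wGS V E S u = 2 \<Longrightarrow> card (L (Suc k)) = 2 * card (L k - S)"
proof -
  assume "wGS V E S u = 2"
  then have s: "(\<Sum>j\<le>card V. real (acnt j) * (1/2)^j) = 1" using w_sum by simp
  have bK: "bcnt (card V) = 0" unfolding bcnt_def using L_empty by simp
  have "Phi acnt bcnt (card V) = Phi acnt bcnt 0" unfolding Phi0 using s bK unfolding Phi_def by simp
  show ?thesis
  proof (cases "k < card V")
    case True
    then show ?thesis using Phi_eq[of "card V" acnt bcnt k] cond_le \<open>Phi acnt bcnt (card V) = _\<close>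
      ab_card unfolding bcnt_def by metis
  next
    case False
    then show ?thesis using L_empty[of k] L_empty[of "Suc k"] by simp
  qed
qed

end

locale G2 = G1 +
  assumes tightA: "\<And>k. card (L (Suc k)) = 2 * card (L k - S)"
begin

lemma T12: "(x \<in> L k - S \<longrightarrow> card {y \<in> L (Suc k). E x y} = 2) \<and> (y \<in> L (Suc k) \<longrightarrow> card {x \<in> L k - S. E x y} = 1)"
proof -
  let ?A = "L k - S" and ?B = "L (Suc k)"
  have fA: "finite ?A" and fB: "finite ?B" using finL by auto
  have f1: "1 \<le> card {x \<in> ?A. E x y}" if "y \<in> ?B" for y
  proof -
    have "R y" "lev y = Suc k" using that unfolding L_def by auto
    then obtain x where "R x" "lev x = k" "x \<notin> S" "E x y" using parent by blast
    then have "x \<in> {x \<in> ?A. E x y}" using R_V unfolding L_def by auto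
    then show ?thesis using fA by (metis (no_types, lifting) One_nat_def Suc_leI card_gt_0_iff empty_iff finite_subset mem_Collect_eq subsetI)
  qed
  have c1: "(\<Sum>x\<in>?A. card {y \<in> ?B. E x y}) \<le> (\<Sum>x\<in>?A. 2)" by (rule sum_mono) (rule child_card)
  have c2: "(\<Sum>x\<in>?A. 2) = card ?B" using tightA[of k] by simp
  have c3: "card ?B = (\<Sum>y\<in>?B. 1)" by simp
  have c4: "(\<Sum>y\<in>?B. 1) \<le> (\<Sum>y\<in>?B. card {x \<in> ?A. E x y})" by (rule sum_mono) (rule f1)
  have c5: "(\<Sum>y\<in>?B. card {x \<in> ?A. E x y}) = (\<Sum>x\<in>?A. card {y \<in> ?B. E x y})"
    by (rule double_count[symmetric]) (use fA fB in auto)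
  have eqs: "(\<Sum>x\<in>?A. card {y \<in> ?B. E x y}) = (\<Sum>x\<in>?A. 2)"
      "(\<Sum>y\<in>?B. 1) = (\<Sum>y\<in>?B. card {x \<in> ?A. E x y})"
    using c1 c2 c3 c4 c5 by linarith+
  show ?thesis
  proof (intro conjI impI)
    assume "x \<in> ?A" then show "card {y \<in> ?B. E x y} = 2"
      using sum_mono_inv[OF eqs(1) child_card _ fA] by blast
  next
    assume "y \<in> ?B" then show "card {x \<in> ?A. E x y} = 1"
      using sum_mono_inv[OF eqs(2) f1 _ fB] by simp
  qed
qed


definition VT :: "'a set" where "VT = {x. R x}"
definition ET :: "'a \<Rightarrow> 'a \<Rightarrow> bool" where
  "ET x y \<longleftrightarrow> R x \<and> R y \<and> E x y \<and> ((x \<notin> S \<and> lev y = Suc (lev x)) \<or> (y \<notin> S \<and> lev x = Suc (lev y)))"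

lemma ET_sym: "ET x y \<Longrightarrow> ET y x" unfolding ET_def using Esym by blast

lemma ET_lev: "ET x y \<Longrightarrow> lev y = Suc (lev x) \<or> lev x = Suc (lev y)" unfolding ET_def by blast

lemma ET_down: "ET z y \<Longrightarrow> lev z \<le> lev y \<Longrightarrow> z \<notin> S \<and> lev y = Suc (lev z) \<and> R z \<and> R y \<and> E z y"
  unfolding ET_def by auto

lemma uniq_parent: "z \<in> L k - S \<Longrightarrow> z' \<in> L k - S \<Longrightarrow> y \<in> L (Suc k) \<Longrightarrow> E z y \<Longrightarrow> E z' y \<Longrightarrow> z = z'"
proof -
  assume a: "z \<in> L k - S" "z' \<in> L k - S" "y \<in> L (Suc k)" "E z y" "E z' y"
  have "card {x \<in> L k - S. E x y} = 1" using T12 a(3) by blast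
  then obtain w where eq: "{x \<in> L k - S. E x y} = {w}" by (rule card_1_singletonE)
  have "z \<in> {w}" "z' \<in> {w}" unfolding eq[symmetric] using a by auto
  then show ?thesis by simp
qed

lemma ET_walk_low: "p \<noteq> [] \<Longrightarrow> successively ET p \<Longrightarrow> lev (last p) \<le> lev (hd p) + (length p - 1)"
proof (induction p)
  case Nil then show ?case by simp
next
  case (Cons x r)
  show ?case
  proof (cases "r = []")
    case True then show ?thesis by simp
  next
    case False
    then have "ET x (hd r)" "successively ET r" using Cons.prems by (auto simp: successively_Cons)
    then have "lev (last r) \<le> lev (hd r) + (length r - 1)" "lev (hd r) \<le> Suc (lev x)"
      using Cons.IH False ET_lev[OF \<open>ET x (hd r)\<close>] by auto
    then show ?thesis using False by (cases r) auto
  qed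
qed

lemma ET_walk_set: "successively ET p \<Longrightarrow> p \<noteq> [] \<Longrightarrow> R (hd p) \<Longrightarrow> set p \<subseteq> VT"
proof (induction p)
  case Nil then show ?case by simp
next
  case (Cons x r)
  then show ?case unfolding VT_def
    by (cases r) (auto simp: successively_Cons ET_def)
qed

lemma ET_walk_up: "R x \<Longrightarrow> \<exists>p. p \<noteq> [] \<and> successively ET p \<and> hd p = u \<and> last p = x \<and> length p = Suc (lev x)"
proof (induction "lev x" arbitrary: x)
  case 0
  then have "x = u" using lev0 by simp
  then show ?case using lev_u by (intro exI[of _ "[u]"]) auto
next
  case (Suc k)
  obtain z where z: "R z" "lev z = k" "z \<notin> S" "E z x" using parent[OF Suc.prems Suc.hyps(2)[symmetric]] by blast
  obtain p where p: "p \<noteq> []" "successively ET p" "hd p = u" "last p = z" "length p = Suc (lev z)"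
    using Suc.hyps(1)[OF z(2)[symmetric] z(1)] z(2) by blast
  have "ET z x" unfolding ET_def using z Suc by auto
  then have "successively ET (p @ [x])" using p by (simp add: successively_append_iff)
  then show ?case using p z Suc.hyps(2) by (intro exI[of _ "p @ [x]"]) auto
qed

lemma depth_eq: "R x \<Longrightarrow> depth VT ET u x = lev x"
proof -
  assume Rx: "R x"
  obtain p where p: "p \<noteq> []" "successively ET p" "hd p = u" "last p = x" "length p = Suc (lev x)"
    using ET_walk_up[OF Rx] by blast
  obtain q where q: "q \<noteq> []" "successively ET q" "distinct q" "hd q = hd p"
     "last q = last p" "set q \<subseteq> set p" "length q \<le> length p"
    using walk_to_path[OF p(1,2)] by blast
  have "lev x \<le> length q - 1" using ET_walk_low[OF q(1,2)] q p lev_u by simp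
  then have lq: "length q = Suc (lev x)" using q(7) p(5) q(1) by (cases q) auto
  have sq: "set q \<subseteq> VT" using ET_walk_set[OF p(2,1)] p(3) R_u q(6) by auto
  show ?thesis unfolding depth_def
  proof (rule Least_equality)
    show "\<exists>p. is_path VT ET p \<and> hd p = u \<and> last p = x \<and> length p = Suc (lev x)"
      using q lq sq p unfolding is_path_iff by (intro exI[of _ q]) auto
  next
    fix n assume "\<exists>p. is_path VT ET p \<and> hd p = u \<and> last p = x \<and> length p = Suc n"
    then obtain r where r: "is_path VT ET r" "hd r = u" "last r = x" "length r = Suc n" by blast
    then show "lev x \<le> n" using ET_walk_low[of r] lev_u unfolding is_path_iff by fastforce
  qed
qed

lemma tree: "is_tree VT ET"
  unfolding is_tree_def
proof (intro conjI ballI)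
  show "VT \<noteq> {}" using R_u unfolding VT_def by auto
next
  fix x y assume xy: "x \<in> VT" "y \<in> VT"
  obtain p1 where p1: "p1 \<noteq> []" "successively ET p1" "hd p1 = u" "last p1 = x"
    using ET_walk_up xy unfolding VT_def by blast
  obtain p2 where p2: "p2 \<noteq> []" "successively ET p2" "hd p2 = u" "last p2 = y"
    using ET_walk_up xy unfolding VT_def by blast
  let ?w = "rev p1 @ tl p2"
  have w: "successively ET ?w" "?w \<noteq> []" "hd ?w = x" "last ?w = y" "set ?w \<subseteq> set p1 \<union> set p2"
    using join_walks[OF p1(2) p2(2) ET_sym p1(1) p2(1)] p1 p2 by auto
  have s12: "set p1 \<union> set p2 \<subseteq> VT" using ET_walk_set p1 p2 R_u by auto
  obtain q where q: "q \<noteq> []" "successively ET q" "distinct q" "hd q = hd ?w"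
     "last q = last ?w" "set q \<subseteq> set ?w"
    using walk_to_path[OF w(2,1)] by blast
  show "\<exists>p. is_path VT ET p \<and> hd p = x \<and> last p = y"
    using q w s12 unfolding is_path_iff by (intro exI[of _ q]) auto
next
  show "\<not> (\<exists>c. is_path VT ET c \<and> 3 \<le> length c \<and> ET (last c) (hd c))"
  proof
    assume "\<exists>c. is_path VT ET c \<and> 3 \<le> length c \<and> ET (last c) (hd c)"
    then obtain c where c: "c \<noteq> []" "set c \<subseteq> VT" "distinct c" "successively ET c" "3 \<le> length c"
      "ET (last c) (hd c)" unfolding is_path_iff by blast
    define n where "n = length c"
    define M where "M = Max (lev ` set c)"
    have "M \<in> lev ` set c" unfolding M_def using c(1) by (intro Max_in) auto
    then obtain i where i: "i < n" "lev (c ! i) = M" unfolding n_def by (metis imageE in_set_conv_nth)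
    have Mge: "lev (c ! j) \<le> M" if "j < n" for j unfolding M_def n_def using that by (intro Max_ge) (auto simp: n_def)
    define pv where "pv = (if i = 0 then n - 1 else i - 1)"
    define nx where "nx = (if i = n - 1 then 0 else i + 1)"
    have lastc: "last c = c ! (n - 1)" unfolding n_def using c(1) by (simp add: last_conv_nth)
    have hdc: "hd c = c ! 0" using c(1) by (simp add: hd_conv_nth)
    have e1: "ET (c ! pv) (c ! i)"
    proof (cases "i = 0")
      case True then show ?thesis using c(6) lastc hdc unfolding pv_def by simp
    next
      case False then show ?thesis using successively_nth[OF c(4), of "i - 1"] i unfolding pv_def n_def by simp
    qed
    have e2: "ET (c ! nx) (c ! i)"
    proof (cases "i = n - 1")
      case True then show ?thesis using c(6) lastc hdc ET_sym unfolding nx_def by simp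
    next
      case False then show ?thesis using successively_nth[OF c(4), of i] i ET_sym unfolding nx_def n_def by simp
    qed
    have pvn: "pv < n" "nx < n" "pv \<noteq> nx" using i c(5) unfolding pv_def nx_def n_def by auto
    then have ne: "c ! pv \<noteq> c ! nx" using c(3) unfolding n_def by (simp add: nth_eq_iff_index_eq)
    have d1: "c ! pv \<notin> S \<and> lev (c ! i) = Suc (lev (c ! pv)) \<and> R (c ! pv) \<and> R (c ! i) \<and> E (c ! pv) (c ! i)"
      by (rule ET_down[OF e1]) (use Mge pvn i in auto)
    have d2: "c ! nx \<notin> S \<and> lev (c ! i) = Suc (lev (c ! nx)) \<and> R (c ! nx) \<and> R (c ! i) \<and> E (c ! nx) (c ! i)"
      by (rule ET_down[OF e2]) (use Mge pvn i in auto)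
    have "c ! pv = c ! nx"
      by (rule uniq_parent[of _ "lev (c ! pv)" _ "c ! i"]) (use d1 d2 R_V in \<open>auto simp: L_def\<close>)
    then show False using ne by simp
  qed
qed

lemma children_eq: "R x \<Longrightarrow> children VT ET u x = (if x \<in> S then {} else {y \<in> L (Suc (lev x)). E x y})"
  unfolding children_def using depth_eq R_V unfolding VT_def ET_def L_def by auto

lemma leaves_eq: "leaves VT ET u = S \<inter> VT"
proof -
  have "children VT ET u x \<noteq> {}" if "R x" "x \<notin> S" for x
  proof -
    have "card {y \<in> L (Suc (lev x)). E x y} = 2" using T12 that R_V unfolding L_def by blast
    then have "{y \<in> L (Suc (lev x)). E x y} \<noteq> {}" by (metis card.empty zero_neq_numeral)
    then show ?thesis using children_eq[OF that(1)] that(2) by simp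
  qed
  then have "children VT ET u x = {} \<longleftrightarrow> x \<in> S" if "x \<in> VT" for x
    using children_eq[of x] that unfolding VT_def by (cases "x \<in> S") auto
  then show ?thesis unfolding leaves_def by auto
qed

lemma full: "full_binary VT ET u"
  unfolding full_binary_def leaves_eq
proof (intro ballI impI)
  fix x assume "x \<in> VT" "x \<notin> S \<inter> VT"
  then have "R x" "x \<notin> S" unfolding VT_def by auto
  then show "card (children VT ET u x) = 2" using children_eq T12 R_V unfolding L_def by auto
qed

lemma subg: "subgraph VT ET V E"
  unfolding subgraph_def VT_def using R_V ET_sym unfolding ET_def by blast

lemma exists_tree: "\<exists>VT ET. subgraph VT ET V E \<and> is_tree VT ET \<and> u \<in> VT
         \<and> full_binary VT ET u \<and> S \<inter> VT = leaves VT ET u"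
  using subg tree full leaves_eq R_u unfolding VT_def by blast

end

locale G3 = G0 +
  fixes TV :: "'a set" and TE :: "'a \<Rightarrow> 'a \<Rightarrow> bool"
  assumes sub: "subgraph TV TE V E" and tr: "is_tree TV TE" and uT: "u \<in> TV"
    and fb: "full_binary TV TE u" and lf: "S \<inter> TV = leaves TV TE u"
begin

lemma TE_E: "TE x y \<Longrightarrow> E x y \<and> x \<in> TV \<and> y \<in> TV" and TE_sym: "TE x y \<Longrightarrow> TE y x"
  and TVV: "TV \<subseteq> V"
  using sub unfolding subgraph_def by auto

lemma finTV: "finite TV" using TVV finV finite_subset by blast

abbreviation dT :: "'a \<Rightarrow> nat" where "dT x \<equiv> depth TV TE u x"

lemma dT_ex: "x \<in> TV \<Longrightarrow> \<exists>p. is_path TV TE p \<and> hd p = u \<and> last p = x \<and> length p = Suc (dT x)"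
proof -
  assume x: "x \<in> TV"
  obtain p where p: "is_path TV TE p" "hd p = u" "last p = x" using tr x uT unfolding is_tree_def by blast
  then have "\<exists>n p. is_path TV TE p \<and> hd p = u \<and> last p = x \<and> length p = Suc n"
    unfolding is_path_iff by (metis Suc_diff_1 length_greater_0_conv)
  then show ?thesis unfolding depth_def by (rule LeastI_ex)
qed

lemma walk_set: "successively TE p \<Longrightarrow> p \<noteq> [] \<Longrightarrow> hd p \<in> TV \<Longrightarrow> set p \<subseteq> TV"
proof (induction p)
  case Nil then show ?case by simp
next
  case (Cons x r) then show ?case by (cases r) (auto simp: successively_Cons dest: TE_E)
qed

lemma dT_walk: "p \<noteq> [] \<Longrightarrow> successively TE p \<Longrightarrow> hd p = u \<Longrightarrow> dT (last p) \<le> length p - 1"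
proof -
  assume p: "p \<noteq> []" "successively TE p" "hd p = u"
  obtain q where q: "q \<noteq> []" "successively TE q" "distinct q" "hd q = hd p"
     "last q = last p" "set q \<subseteq> set p" "length q \<le> length p"
    using walk_to_path[OF p(1,2)] by blast
  have "set p \<subseteq> TV" using walk_set p uT by auto
  then have "is_path TV TE q" using q unfolding is_path_iff by auto
  then have "dT (last p) \<le> length q - 1" unfolding depth_def using q p
    by (intro Least_le) (metis Suc_diff_1 length_greater_0_conv)
  then show ?thesis using q(7) by linarith
qed

lemma dT_edge: "TE x y \<Longrightarrow> dT y \<le> Suc (dT x)"
proof -
  assume e: "TE x y"
  obtain p where p: "is_path TV TE p" "hd p = u" "last p = x" "length p = Suc (dT x)"
    using dT_ex TE_E[OF e] by blast
  have "successively TE (p @ [y])" using p e unfolding is_path_iff by (simp add: successively_append_iff)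
  then show ?thesis using dT_walk[of "p @ [y]"] p unfolding is_path_iff by auto
qed

lemma dT_tri: "p \<noteq> [] \<Longrightarrow> successively TE p \<Longrightarrow> dT (last p) \<le> dT (hd p) + (length p - 1)"
proof (induction p)
  case Nil then show ?case by simp
next
  case (Cons x r)
  show ?case
  proof (cases "r = []")
    case True then show ?thesis by simp
  next
    case False
    then have e: "TE x (hd r)" "successively TE r" using Cons.prems by (auto simp: successively_Cons)
    then have "dT (last r) \<le> dT (hd r) + (length r - 1)" "dT (hd r) \<le> Suc (dT x)"
      using Cons.IH False dT_edge[OF e(1)] by auto
    then show ?thesis using False by (cases r) auto
  qed
qed

lemma dT_short: "is_path TV TE p \<Longrightarrow> hd p = u \<Longrightarrow> length p = Suc (dT (last p)) \<Longrightarrow> j < length p \<Longrightarrow> dT (p ! j) = j"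
proof -
  assume p: "is_path TV TE p" "hd p = u" "length p = Suc (dT (last p))" "j < length p"
  have ne: "p \<noteq> []" and sp: "successively TE p" using p unfolding is_path_iff by auto
  have tk: "take (Suc j) p = take j p @ [p ! j]" using p(4) by (simp add: take_Suc_conv_app_nth)
  have "successively TE (take (Suc j) p)" using sp append_take_drop_id[of "Suc j" p]
    by (metis successively_append_iff)
  then have le: "dT (p ! j) \<le> j" using dT_walk[of "take (Suc j) p"] tk p(2) ne p(4)
    by (cases j) (auto simp: hd_conv_nth)
  have sd: "successively TE (drop j p)" using sp append_take_drop_id[of j p]
    by (metis successively_append_iff)
  have "dT (last (drop j p)) \<le> dT (hd (drop j p)) + (length (drop j p) - 1)"
    by (rule dT_tri) (use sd p(4) in auto)
  then have "dT (last p) \<le> dT (p ! j) + (length p - j - 1)" using p(4) by (simp add: hd_drop_conv_nth)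
  then show ?thesis using le p(3,4) by linarith
qed

lemma dT0: "x \<in> TV \<Longrightarrow> dT x = 0 \<Longrightarrow> x = u"
  using dT_ex[of x] unfolding is_path_iff by (metis One_nat_def hd_Cons_tl last_ConsL length_0_conv length_tl diff_Suc_1)

lemma dT_bound: "x \<in> TV \<Longrightarrow> dT x < card TV"
proof -
  assume "x \<in> TV"
  then obtain p where p: "is_path TV TE p" "length p = Suc (dT x)" using dT_ex by blast
  have "length p = card (set p)" using p(1) unfolding is_path_iff by (simp add: distinct_card)
  also have "\<dots> \<le> card TV" using p(1) finTV unfolding is_path_iff by (simp add: card_mono)
  finally show ?thesis using p(2) by simp
qed

lemma leaf_lev: "x \<in> S \<inter> TV \<Longrightarrow> R x \<and> lev x \<le> dT x"
proof -
  assume x: "x \<in> S \<inter> TV"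
  obtain p where p: "is_path TV TE p" "hd p = u" "last p = x" "length p = Suc (dT x)"
    using dT_ex x by blast
  have lp: "length p = Suc (dT (last p))" using p(3,4) by simp
  have sp: "successively TE p" and pne: "p \<noteq> []" using p(1) unfolding is_path_iff by auto
  have pS: "p ! i \<notin> S" if i: "Suc i < length p" for i
  proof -
    have e: "TE (p ! i) (p ! Suc i)" by (rule successively_nth[OF sp i])
    have d1: "dT (p ! i) = i" using dT_short[OF p(1,2) lp] i by simp
    have d2: "dT (p ! Suc i) = Suc i" using dT_short[OF p(1,2) lp i] .
    have te: "p ! i \<in> TV" "p ! Suc i \<in> TV" using TE_E[OF e] by simp_all
    have "p ! Suc i \<in> children TV TE u (p ! i)" unfolding children_def
      using e d1 d2 te(2) by simp
    then have nl: "p ! i \<notin> leaves TV TE u" unfolding leaves_def by blast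
    show ?thesis
    proof
      assume "p ! i \<in> S"
      then have "p ! i \<in> S \<inter> TV" using te(1) by simp
      then have "p ! i \<in> leaves TV TE u" by (simp only: lf)
      then show False using nl by simp
    qed
  qed
  have "set (butlast p) \<inter> S = {}"
  proof -
    have "y \<notin> S" if yb: "y \<in> set (butlast p)" for y
    proof -
      obtain i where i: "i < length (butlast p)" "butlast p ! i = y" using yb unfolding in_set_conv_nth by blast
      have si: "Suc i < length p" using i(1) by simp
      have "y = p ! i" using i nth_butlast[OF i(1)] by simp
      then show ?thesis using pS[OF si] by simp
    qed
    then show ?thesis by blast
  qed
  moreover have "successively E p"
    by (rule successively_mono[OF sp]) (simp add: TE_E)
  moreover have "set p \<subseteq> V" using p(1) TVV unfolding is_path_iff by blast
  ultimately have "gw p x" using p(2,3) pne unfolding gw_def by blast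
  then show ?thesis using lev_le[of p x] p(4) unfolding R_def by auto
qed

lemma uniq_par: "x1 \<in> TV \<Longrightarrow> x2 \<in> TV \<Longrightarrow> y \<in> children TV TE u x1 \<Longrightarrow> y \<in> children TV TE u x2 \<Longrightarrow> x1 = x2"
proof (rule ccontr)
  assume a: "x1 \<in> TV" "x2 \<in> TV" "y \<in> children TV TE u x1" "y \<in> children TV TE u x2" "x1 \<noteq> x2"
  have y: "TE x1 y" "TE x2 y" "dT y = Suc (dT x1)" "dT y = Suc (dT x2)" using a(3,4) unfolding children_def by auto
  obtain p1 where p1: "is_path TV TE p1" "hd p1 = u" "last p1 = x1" "length p1 = Suc (dT x1)"
    using dT_ex a(1) by blast
  obtain p2 where p2: "is_path TV TE p2" "hd p2 = u" "last p2 = x2" "length p2 = Suc (dT x2)"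
    using dT_ex a(2) by blast
  have ny1: "y \<notin> set p1"
  proof
    assume "y \<in> set p1"
    then obtain j where "j < length p1" "p1 ! j = y" by (metis in_set_conv_nth)
    then show False using dT_short[OF p1(1,2)] p1 y by auto
  qed
  have ny2: "y \<notin> set p2"
  proof
    assume "y \<in> set p2"
    then obtain j where "j < length p2" "p2 ! j = y" by (metis in_set_conv_nth)
    then show False using dT_short[OF p2(1,2)] p2 y by auto
  qed
  let ?w = "rev p1 @ tl p2"
  have w: "successively TE ?w" "?w \<noteq> []" "hd ?w = x1" "last ?w = x2" "set ?w \<subseteq> set p1 \<union> set p2"
    using join_walks[of TE p1 p2] p1 p2 TE_sym unfolding is_path_iff by auto
  obtain q where q: "q \<noteq> []" "successively TE q" "distinct q" "hd q = hd ?w"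
     "last q = last ?w" "set q \<subseteq> set ?w" "length q \<le> length ?w"
    using walk_to_path[OF w(2,1)] by blast
  have yq: "y \<notin> set q" using q(6) w(5) ny1 ny2 by blast
  have hq: "hd q = x1" "last q = x2" using q(4,5) w(3,4) by simp_all
  have lq: "2 \<le> length q"
  proof (rule ccontr)
    assume "\<not> 2 \<le> length q"
    then have "length q = 1" using q(1) by (cases q) (auto simp: not_le)
    then have "hd q = last q" using q(1) by (simp add: hd_conv_nth last_conv_nth)
    then show False using hq a(5) by simp
  qed
  have "is_path TV TE (q @ [y])" unfolding is_path_iff using q w yq y TE_E[OF y(1)] p1 p2
    unfolding is_path_iff by (auto simp: successively_append_iff TE_sym)
  moreover have "3 \<le> length (q @ [y])" using lq by simp
  moreover have "TE (last (q @ [y])) (hd (q @ [y]))" using q w y TE_sym by simp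
  ultimately show False using tr unfolding is_tree_def by blast
qed

definition M :: "nat \<Rightarrow> 'a set" where "M k = {x \<in> TV. dT x = k}"
definition a2 :: "nat \<Rightarrow> nat" where "a2 k = card (M k \<inter> S)"
definition b2 :: "nat \<Rightarrow> nat" where "b2 k = card (M k - S)"

lemma finM: "finite (M k)" unfolding M_def using finTV by auto

lemma M_grow: "2 * b2 k \<le> a2 (Suc k) + b2 (Suc k)"
proof -
  have ch: "children TV TE u x \<subseteq> M (Suc k)" if "x \<in> M k - S" for x
    using that unfolding children_def M_def by auto
  have c2: "card (children TV TE u x) = 2" if "x \<in> M k - S" for x
  proof -
    have "x \<in> TV" "x \<notin> leaves TV TE u" using that lf unfolding M_def by auto
    then show ?thesis using fb unfolding full_binary_def by blast
  qed
  have "card (\<Union>x\<in>M k - S. children TV TE u x) = (\<Sum>x\<in>M k - S. card (children TV TE u x))"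
  proof (rule card_UN_disjoint)
    show "finite (M k - S)" using finM by auto
    show "\<forall>i\<in>M k - S. finite (children TV TE u i)" using ch finM finite_subset by blast
    show "\<forall>i\<in>M k - S. \<forall>j\<in>M k - S. i \<noteq> j \<longrightarrow> children TV TE u i \<inter> children TV TE u j = {}"
      using uniq_par unfolding M_def by blast
  qed
  also have "\<dots> = 2 * b2 k" using c2 unfolding b2_def by simp
  finally have "2 * b2 k = card (\<Union>x\<in>M k - S. children TV TE u x)" by simp
  also have "\<dots> \<le> card (M (Suc k))" by (rule card_mono) (use finM ch in auto)
  also have "\<dots> = a2 (Suc k) + b2 (Suc k)" unfolding a2_def b2_def using finM
    by (metis card_Int_Diff inf.commute)
  finally show ?thesis .
qed

lemma kraft: "(\<Sum>x\<in>S \<inter> TV. (1/2::real)^(dT x)) \<ge> 1"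
proof -
  let ?K = "card TV"
  have "dT u = 0" unfolding depth_def
    by (rule Least_equality) (use uT in \<open>auto intro!: exI[of _ "[u]"] simp: is_path_iff\<close>)
  then have M0: "M 0 = {u}" unfolding M_def using dT0 uT by auto
  have "{u} - S = {u}" using uS by auto
  then have P0: "Phi a2 b2 0 = 1" unfolding Phi_def a2_def b2_def using M0 uS by simp
  have "M ?K = {}" unfolding M_def using dT_bound by fastforce
  then have bK: "b2 ?K = 0" unfolding b2_def by simp
  have "Phi a2 b2 ?K \<ge> Phi a2 b2 0" by (rule Phi_ge[of ?K]) (use M_grow in auto)
  then have "(\<Sum>j\<le>?K. real (a2 j) * (1/2)^j) \<ge> 1" using P0 bK unfolding Phi_def by simp
  also have "(\<Sum>j\<le>?K. real (a2 j) * (1/2)^j) = (\<Sum>x\<in>S \<inter> TV. (1/2::real)^(dT x))"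
  proof -
    have "(\<Sum>x\<in>S \<inter> TV. (1/2::real)^(dT x)) = (\<Sum>j\<le>?K. real (card {z\<in>S \<inter> TV. dT z = j}) * (1/2)^j)"
      by (rule sum_group_pow) (use finS dT_bound less_imp_le in auto)
    also have "\<dots> = (\<Sum>j\<le>?K. real (a2 j) * (1/2)^j)"
    proof (rule sum.cong)
      fix j
      have "{z\<in>S \<inter> TV. dT z = j} = M j \<inter> S" unfolding M_def by auto
      then show "real (card {z\<in>S \<inter> TV. dT z = j}) * (1/2)^j = real (a2 j) * (1/2)^j"
        unfolding a2_def by simp
    qed simp
    finally show ?thesis by simp
  qed
  finally show ?thesis .
qed

lemma w_ge: "wGS V E S u \<ge> 2"
proof -
  have "2 \<le> 2 * (\<Sum>x\<in>S \<inter> TV. (1/2::real)^(dT x))" using kraft by simp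
  also have "\<dots> = (\<Sum>x\<in>S \<inter> TV. 2 * (1/2::real)^(dT x))" by (simp add: sum_distrib_left)
  also have "\<dots> \<le> (\<Sum>x\<in>S \<inter> TV. 2 * (1/2::real)^(lev x))"
    by (rule sum_mono) (use leaf_lev in \<open>auto intro: power_decreasing\<close>)
  also have "\<dots> \<le> (\<Sum>v\<in>{v\<in>S. R v}. 2 * (1/2::real)^(lev v))"
    by (rule sum_mono2) (use finS leaf_lev in auto)
  finally show ?thesis using w_eq by simp
qed

end

lemma case_uS:
  assumes gr: "graph V E" and SV: "S \<subseteq> V" and uV: "u \<in> V" and uS: "u \<in> S"
  shows "wGS V E S u = 2 \<and> (\<exists>VT ET. subgraph VT ET V E \<and> is_tree VT ET \<and> u \<in> VT
         \<and> full_binary VT ET u \<and> S \<inter> VT = leaves VT ET u)"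
proof
  have finS: "finite S" using gr SV unfolding graph_def using finite_subset by blast
  have sp: "S_path V E S u u [u]" unfolding S_path_def is_path_iff using uV uS by simp
  have du: "distGS V E S u u = 0"
  proof -
    have "(LEAST n. \<exists>p. S_path V E S u u p \<and> length p = Suc n) = 0"
      by (rule Least_equality) (use sp in auto)
    then show ?thesis unfolding distGS_def using sp by (auto simp: zero_enat_def)
  qed
  have dv: "distGS V E S u v = \<infinity>" if "v \<in> S" "v \<noteq> u" for v
  proof -
    have "\<not> S_path V E S u v p" for p
    proof
      assume "S_path V E S u v p"
      then have "card ({u, v} \<inter> S) = 1" unfolding S_path_def by auto
      moreover have "{u, v} \<inter> S = {u, v}" using that uS by auto
      ultimately show False using that by simp
    qed
    then show ?thesis unfolding distGS_def by auto
  qed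
  have "wGS V E S u = (case distGS V E S u u of enat d \<Rightarrow> (1/2::real) powr (real d - 1) | \<infinity> \<Rightarrow> 0)
      + (\<Sum>v\<in>S - {u}. (case distGS V E S u v of enat d \<Rightarrow> (1/2::real) powr (real d - 1) | \<infinity> \<Rightarrow> 0))"
    unfolding wGS_def using finS uS by (simp add: sum.remove)
  also have "\<dots> = 2" using du dv by (simp add: zero_enat_def powr_minus)
  finally show "wGS V E S u = 2" .
next
  let ?TV = "{u}" and ?TE = "\<lambda>x y::'a. False"
  have ch: "children ?TV ?TE u u = {}" unfolding children_def by simp
  have "subgraph ?TV ?TE V E" unfolding subgraph_def using uV by simp
  moreover have "is_tree ?TV ?TE"
    unfolding is_tree_def
  proof (intro conjI ballI)
    fix x y assume "x \<in> ?TV" "y \<in> ?TV"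
    then show "\<exists>p. is_path ?TV ?TE p \<and> hd p = x \<and> last p = y"
      by (intro exI[of _ "[u]"]) (simp add: is_path_iff)
  next
    show "\<not> (\<exists>c. is_path ?TV ?TE c \<and> 3 \<le> length c \<and> ?TE (last c) (hd c))" by simp
  qed simp
  moreover have "leaves ?TV ?TE u = {u}" unfolding leaves_def using ch by auto
  moreover have "full_binary ?TV ?TE u" unfolding full_binary_def leaves_def using ch by auto
  ultimately show "\<exists>VT ET. subgraph VT ET V E \<and> is_tree VT ET \<and> u \<in> VT
         \<and> full_binary VT ET u \<and> S \<inter> VT = leaves VT ET u" using uS by (intro exI[of _ ?TV] exI[of _ ?TE]) auto
qed

theorem lemma1:
  fixes V :: "'a set" and E :: "'a \<Rightarrow> 'a \<Rightarrow> bool" and S :: "'a set" and u :: 'a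
  assumes "graph V E"
    and "\<forall>x\<in>V. degree V E x \<le> 3"
    and "S \<subseteq> V"
    and "u \<in> V"
    and "degree V E u \<le> 2"
  shows "wGS V E S u \<le> 2 \<and>
    (wGS V E S u = 2 \<longleftrightarrow>
      (\<exists>VT ET. subgraph VT ET V E \<and> is_tree VT ET \<and> u \<in> VT
         \<and> full_binary VT ET u \<and> S \<inter> VT = leaves VT ET u))"
proof (cases "u \<in> S")
  case True
  then show ?thesis using case_uS[OF assms(1,3,4) True] by simp
next
  case False
  interpret G1 V E S u
    by (unfold_locales) (use assms False in auto)
  have le: "wGS V E S u \<le> 2" by (rule w_le)
  moreover have "wGS V E S u = 2 \<longleftrightarrow>
      (\<exists>VT ET. subgraph VT ET V E \<and> is_tree VT ET \<and> u \<in> VT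
         \<and> full_binary VT ET u \<and> S \<inter> VT = leaves VT ET u)"
  proof
    assume eq: "wGS V E S u = 2"
    interpret G2 V E S u
      by (unfold_locales) (use assms False tight[OF eq] in auto)
    show "\<exists>VT ET. subgraph VT ET V E \<and> is_tree VT ET \<and> u \<in> VT
         \<and> full_binary VT ET u \<and> S \<inter> VT = leaves VT ET u" by (rule exists_tree)
  next
    assume "\<exists>VT ET. subgraph VT ET V E \<and> is_tree VT ET \<and> u \<in> VT
         \<and> full_binary VT ET u \<and> S \<inter> VT = leaves VT ET u"
    then obtain TV TE where t: "subgraph TV TE V E" "is_tree TV TE" "u \<in> TV"
         "full_binary TV TE u" "S \<inter> TV = leaves TV TE u" by blast
    interpret G3 V E S u TV TE
      by (unfold_locales) (use assms False t in auto)
    show "wGS V E S u = 2" using w_ge le by simp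
  qed
  ultimately show ?thesis by blast
qed

end
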